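(* With the notation below, there are no $t,u\in N'$ such that $\langle N',*',t,u\rangle$ is a partial combinatory algebra.
   Context: Let $X$ be an infinite set of variables and $T(X)$ the set of terms built from variables in $X$ and two constant symbols $s,k$ by a binary application (juxtaposition, associating to the left). Let CL be the term rewriting system with rules $sxyz\to xz(yz)$ and $kxy\to x$; CL is confluent, so every term has at most one normal form. Let $N$ be the set of CL-normal forms, and for $m,n\in N$ let $m*n$ be the normal form of $mn$ if it exists, undefined otherwise. Let $i:=skk$, $\omega:=sii$, $d:=s(k\omega)(k\omega)$. Let $\mathrm{Var}(n)$ be the set of variables of a term $n$, $L:=\{n\in N\mid n*x\text{ is defined for } x\in X\setminus\mathrm{Var}(n)\}$, $N':=L\cup\{d\}$, and let $m*'n$ be $m*n$ if this is defined and lies in $N'$, undefined otherwise. A partial combinatory algebra is a set $A$ with a partial binary operation and elements $S,K\in A$ such that for all $x,y,z\in A$: $Sxy$ is defined, $Sxyz\simeq xz(yz)$, and $Kxy$ is defined and equals $x$; here products associate to the left, a compound product is defined only if all its sub-products are defined, and $\simeq$ means: if either side is defined then both are defined and equal. *)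

theory Defs
  imports Main
begin

datatype 'v cterm = CVar 'v | CS | CK | CApp "'v cterm" "'v cterm"

inductive cl_step :: "'v cterm \<Rightarrow> 'v cterm \<Rightarrow> bool" where
  s_rule: "cl_step (CApp (CApp (CApp CS x) y) z) (CApp (CApp x z) (CApp y z))"
| k_rule: "cl_step (CApp (CApp CK x) y) x"
| app_left: "cl_step m m' \<Longrightarrow> cl_step (CApp m n) (CApp m' n)"
| app_right: "cl_step n n' \<Longrightarrow> cl_step (CApp m n) (CApp m n')"

definition cl_normal :: "'v cterm \<Rightarrow> bool" where
  "cl_normal m \<longleftrightarrow> (\<nexists>m'. cl_step m m')"

definition is_nf_of :: "'v cterm \<Rightarrow> 'v cterm \<Rightarrow> bool" where
  "is_nf_of m n \<longleftrightarrow> cl_step\<^sup>*\<^sup>* m n \<and> cl_normal n"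

definition NF :: "'v cterm set" where
  "NF = {n. cl_normal n}"

text \<open>m * n: the normal form of m n if it exists (unique by confluence), undefined otherwise\<close>
definition nf_app :: "'v cterm \<Rightarrow> 'v cterm \<Rightarrow> 'v cterm option" where
  "nf_app m n = (if \<exists>p. is_nf_of (CApp m n) p
                 then Some (THE p. is_nf_of (CApp m n) p) else None)"

fun cvars :: "'v cterm \<Rightarrow> 'v set" where
  "cvars (CVar x) = {x}"
| "cvars CS = {}"
| "cvars CK = {}"
| "cvars (CApp m n) = cvars m \<union> cvars n"

definition ci :: "'v cterm" where "ci = CApp (CApp CS CK) CK"
definition comega :: "'v cterm" where "comega = CApp (CApp CS ci) ci"
definition cd :: "'v cterm" where
  "cd = CApp (CApp CS (CApp CK comega)) (CApp CK comega)"

definition Lset :: "'v cterm set" where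
  "Lset = {n \<in> NF. \<forall>x. x \<notin> cvars n \<longrightarrow> nf_app n (CVar x) \<noteq> None}"

definition Nprime :: "'v cterm set" where
  "Nprime = Lset \<union> {cd}"

definition nf_app' :: "'v cterm \<Rightarrow> 'v cterm \<Rightarrow> 'v cterm option" where
  "nf_app' m n = (case nf_app m n of
                    Some p \<Rightarrow> (if p \<in> Nprime then Some p else None)
                  | None \<Rightarrow> None)"

fun papp :: "('a \<Rightarrow> 'a \<Rightarrow> 'a option) \<Rightarrow> 'a option \<Rightarrow> 'a option \<Rightarrow> 'a option" where
  "papp f (Some a) (Some b) = f a b"
| "papp f _ _ = None"

text \<open>(A, f, S, K) is a partial combinatory algebra. Kleene equality is equality
  of option values.\<close>
definition is_pca :: "'a set \<Rightarrow> ('a \<Rightarrow> 'a \<Rightarrow> 'a option) \<Rightarrow> 'a \<Rightarrow> 'a \<Rightarrow> bool" where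
  "is_pca A f S K \<longleftrightarrow>
     (\<forall>a\<in>A. \<forall>b\<in>A. \<forall>c. f a b = Some c \<longrightarrow> c \<in> A) \<and>
     S \<in> A \<and> K \<in> A \<and>
     (\<forall>x\<in>A. \<forall>y\<in>A. \<forall>z\<in>A.
        papp f (papp f (Some S) (Some x)) (Some y) \<noteq> None \<and>
        papp f (papp f (papp f (Some S) (Some x)) (Some y)) (Some z)
          = papp f (papp f (Some x) (Some z)) (papp f (Some y) (Some z)) \<and>
        papp f (papp f (Some K) (Some x)) (Some y) = Some x)"

end

theory Submission
  imports Defs
begin

lemma rt_left: "cl_step\<^sup>*\<^sup>* m m' \<Longrightarrow> cl_step\<^sup>*\<^sup>* (CApp m n) (CApp m' n)"
  by (induction rule: rtranclp_induct) (auto intro: rtranclp.rtrancl_into_rtrancl cl_step.app_left)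

lemma rt_right: "cl_step\<^sup>*\<^sup>* n n' \<Longrightarrow> cl_step\<^sup>*\<^sup>* (CApp m n) (CApp m n')"
  by (induction rule: rtranclp_induct) (auto intro: rtranclp.rtrancl_into_rtrancl cl_step.app_right)

lemma rt_app: "cl_step\<^sup>*\<^sup>* m m' \<Longrightarrow> cl_step\<^sup>*\<^sup>* n n' \<Longrightarrow> cl_step\<^sup>*\<^sup>* (CApp m n) (CApp m' n')"
  by (meson rt_left rt_right rtranclp_trans)

section \<open>Parallel reduction and confluence\<close>

inductive par :: "'v cterm \<Rightarrow> 'v cterm \<Rightarrow> bool" where
  p_var: "par (CVar x) (CVar x)"
| p_S: "par CS CS"
| p_K: "par CK CK"
| p_app: "par m m' \<Longrightarrow> par n n' \<Longrightarrow> par (CApp m n) (CApp m' n')"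
| p_s: "par x x' \<Longrightarrow> par y y' \<Longrightarrow> par z z' \<Longrightarrow>
         par (CApp (CApp (CApp CS x) y) z) (CApp (CApp x' z') (CApp y' z'))"
| p_k: "par x x' \<Longrightarrow> par (CApp (CApp CK x) y) x'"

lemma par_refl: "par m m"
  by (induction m) (auto intro: par.intros)

lemma step_par: "cl_step m n \<Longrightarrow> par m n"
  by (induction rule: cl_step.induct) (auto intro: par.intros par_refl)

lemma par_rt: "par m n \<Longrightarrow> cl_step\<^sup>*\<^sup>* m n"
proof (induction rule: par.induct)
  case (p_app m m' n n')
  then show ?case by (simp add: rt_app)
next
  case (p_s x x' y y' z z')
  have "cl_step\<^sup>*\<^sup>* (CApp (CApp (CApp CS x) y) z) (CApp (CApp (CApp CS x') y') z')"
    using p_s by (simp add: rt_app)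
  also have "cl_step (CApp (CApp (CApp CS x') y') z') (CApp (CApp x' z') (CApp y' z'))"
    by (rule cl_step.s_rule)
  finally show ?case .
next
  case (p_k x x' y)
  have "cl_step\<^sup>*\<^sup>* (CApp (CApp CK x) y) (CApp (CApp CK x') y)"
    using p_k by (simp add: rt_app)
  also have "cl_step (CApp (CApp CK x') y) x'" by (rule cl_step.k_rule)
  finally show ?case .
qed auto

fun dev :: "'v cterm \<Rightarrow> 'v cterm" where
  "dev (CApp (CApp (CApp CS x) y) z) = CApp (CApp (dev x) (dev z)) (CApp (dev y) (dev z))"
| "dev (CApp (CApp CK x) y) = dev x"
| "dev (CApp m n) = CApp (dev m) (dev n)"
| "dev t = t"

inductive_cases parSE: "par CS m"
inductive_cases parKE: "par CK m"
inductive_cases parSxE: "par (CApp CS x) m"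
inductive_cases parKxE: "par (CApp CK x) m"
inductive_cases parSxyE: "par (CApp (CApp CS x) y) m"

lemma par_dev: "par m n \<Longrightarrow> par n (dev m)"
proof (induction rule: par.induct)
  case (p_app m m' n n')
  show ?case
  proof (cases "\<exists>x y. m = CApp (CApp CS x) y")
    case True
    then obtain x y where m: "m = CApp (CApp CS x) y" by blast
    from p_app(1) m obtain x' y' where m': "m' = CApp (CApp CS x') y'"
      by (auto elim!: parSxyE parSxE parSE)
    from p_app(3) m m' have "par (CApp (CApp CS x') y') (CApp (CApp CS (dev x)) (dev y))" by simp
    then have "par x' (dev x)" "par y' (dev y)" by (auto elim!: parSxyE parSxE parSE)
    then show ?thesis using m m' p_app(4) by (auto intro: par.intros)
  next
    case False
    show ?thesis
    proof (cases "\<exists>x. m = CApp CK x")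
      case True
      then obtain x where m: "m = CApp CK x" by blast
      from p_app(1) m obtain x' where m': "m' = CApp CK x'"
        by (auto elim!: parKxE parKE)
      from p_app(3) m m' have "par (CApp CK x') (CApp CK (dev x))" by simp
      then have "par x' (dev x)" by (auto elim!: parKxE parKE)
      then show ?thesis using m m' by (auto intro: par.intros)
    next
      case False2: False
      have "dev (CApp m n) = CApp (dev m) (dev n)"
        using False False2 by (cases m rule: dev.cases) auto
      then show ?thesis using p_app by (auto intro: par.intros)
    qed
  qed
qed (auto intro: par.intros)

lemma par_strip: "par\<^sup>*\<^sup>* m b \<Longrightarrow> par m a \<Longrightarrow> \<exists>c. par\<^sup>*\<^sup>* a c \<and> par b c"
proof (induction rule: rtranclp_induct)
  case base
  then show ?case by blast
next
  case (step b b')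
  then obtain c where c: "par\<^sup>*\<^sup>* a c" "par b c" by blast
  have "par c (dev b)" "par b' (dev b)" using c step par_dev by auto
  then show ?case using c by (meson rtranclp.rtrancl_into_rtrancl)
qed

lemma par_conf: "par\<^sup>*\<^sup>* m a \<Longrightarrow> par\<^sup>*\<^sup>* m b \<Longrightarrow> \<exists>c. par\<^sup>*\<^sup>* a c \<and> par\<^sup>*\<^sup>* b c"
proof (induction rule: rtranclp_induct)
  case base
  then show ?case by blast
next
  case (step a a')
  then obtain c where c: "par\<^sup>*\<^sup>* a c" "par\<^sup>*\<^sup>* b c" by blast
  obtain c' where "par\<^sup>*\<^sup>* a' c'" "par c c'" using par_strip[OF c(1) step(2)] by blast
  then show ?case using c by (meson rtranclp.rtrancl_into_rtrancl)
qed

lemma rt_par: "cl_step\<^sup>*\<^sup>* m n \<longleftrightarrow> par\<^sup>*\<^sup>* m n"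
proof
  assume "cl_step\<^sup>*\<^sup>* m n" then show "par\<^sup>*\<^sup>* m n"
    by (induction rule: rtranclp_induct) (auto intro: rtranclp.rtrancl_into_rtrancl step_par)
next
  assume "par\<^sup>*\<^sup>* m n" then show "cl_step\<^sup>*\<^sup>* m n"
    by (induction rule: rtranclp_induct) (auto intro: rtranclp_trans par_rt)
qed

lemma confluent: "cl_step\<^sup>*\<^sup>* m a \<Longrightarrow> cl_step\<^sup>*\<^sup>* m b \<Longrightarrow> \<exists>c. cl_step\<^sup>*\<^sup>* a c \<and> cl_step\<^sup>*\<^sup>* b c"
  using par_conf rt_par by metis

lemma normal_rt: "cl_normal p \<Longrightarrow> cl_step\<^sup>*\<^sup>* p q \<Longrightarrow> q = p"
  unfolding cl_normal_def by (auto elim: converse_rtranclpE)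

lemma join_normal: "cl_step\<^sup>*\<^sup>* m a \<Longrightarrow> cl_step\<^sup>*\<^sup>* m p \<Longrightarrow> cl_normal p \<Longrightarrow> cl_step\<^sup>*\<^sup>* a p"
  using confluent normal_rt by metis

lemma nf_unique: "is_nf_of m p \<Longrightarrow> is_nf_of m q \<Longrightarrow> p = q"
  unfolding is_nf_of_def using join_normal normal_rt by metis

lemma nf_app_Some: "nf_app m n = Some p \<Longrightarrow> is_nf_of (CApp m n) p"
  unfolding nf_app_def
  by (auto split: if_splits intro: theI nf_unique)

lemma nf_app_intro: "is_nf_of (CApp m n) p \<Longrightarrow> nf_app m n = Some p"
  unfolding nf_app_def using nf_unique by (auto intro!: the_equality)

lemma nf_app'_Some: "nf_app' m n = Some p \<Longrightarrow> is_nf_of (CApp m n) p \<and> p \<in> Nprime"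
  unfolding nf_app'_def by (auto split: option.splits if_splits dest: nf_app_Some)

lemma nf_app'_intro: "is_nf_of (CApp m n) p \<Longrightarrow> p \<in> Nprime \<Longrightarrow> nf_app' m n = Some p"
  unfolding nf_app'_def by (simp add: nf_app_intro)


fun isredex :: "'v cterm \<Rightarrow> bool" where
  "isredex (CApp (CApp (CApp CS x) y) z) = True"
| "isredex (CApp (CApp CK x) y) = True"
| "isredex _ = False"

lemma normal_var[simp]: "cl_normal (CVar x)"
  unfolding cl_normal_def by (auto elim: cl_step.cases)
lemma normal_S[simp]: "cl_normal CS"
  unfolding cl_normal_def by (auto elim: cl_step.cases)
lemma normal_K[simp]: "cl_normal CK"
  unfolding cl_normal_def by (auto elim: cl_step.cases)

lemma redex_step: "isredex m \<Longrightarrow> \<exists>m'. cl_step m m'"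
  by (induction m rule: isredex.induct) (auto intro: cl_step.intros)

lemma normal_app[simp]:
  "cl_normal (CApp m n) \<longleftrightarrow> cl_normal m \<and> cl_normal n \<and> \<not> isredex (CApp m n)"
proof
  assume a: "cl_normal (CApp m n)"
  then have "\<not> isredex (CApp m n)" using redex_step cl_normal_def by metis
  moreover have "cl_normal m" "cl_normal n" using a unfolding cl_normal_def
    by (auto intro: cl_step.intros)
  ultimately show "cl_normal m \<and> cl_normal n \<and> \<not> isredex (CApp m n)" by blast
next
  assume a: "cl_normal m \<and> cl_normal n \<and> \<not> isredex (CApp m n)"
  show "cl_normal (CApp m n)" unfolding cl_normal_def
  proof
    assume "\<exists>m'. cl_step (CApp m n) m'"
    then obtain m' where "cl_step (CApp m n) m'" by blast
    then show False using a unfolding cl_normal_def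
      by (cases rule: cl_step.cases) auto
  qed
qed

lemma normal_ci[simp]: "cl_normal ci" by (simp add: ci_def)
lemma normal_comega[simp]: "cl_normal comega" by (simp add: comega_def ci_def)

section \<open>omega omega has no normal form\<close>

inductive W :: "'v cterm \<Rightarrow> bool" where
  W_om: "W comega"
| W_i: "W a \<Longrightarrow> W (CApp ci a)"
| W_k: "W a \<Longrightarrow> W (CApp (CApp CK a) b)"

inductive_cases stepKxE: "cl_step (CApp CK x) m"

lemma W_step: "W a \<Longrightarrow> cl_step a a' \<Longrightarrow> W a'"
proof (induction a arbitrary: a' rule: W.induct)
  case W_om
  then show ?case using normal_comega cl_normal_def by metis
next
  case (W_i a)
  from W_i.prems show ?case
  proof (cases rule: cl_step.cases)
    case s_rule
    then show ?thesis using W_i by (auto simp: ci_def intro: W.intros)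
  next
    case k_rule
    then show ?thesis by (auto simp: ci_def)
  next
    case app_left
    then show ?thesis using normal_ci cl_normal_def by metis
  next
    case app_right
    then show ?thesis using W_i by (auto intro: W.intros)
  qed
next
  case (W_k a b)
  from W_k.prems show ?case
  proof (cases rule: cl_step.cases)
    case app_left
    then show ?thesis using W_k
      by (auto elim!: stepKxE intro: W.intros elim: cl_step.cases)
  qed (use W_k in \<open>auto intro: W.intros\<close>)
qed

definition Bad :: "'v cterm \<Rightarrow> bool" where
  "Bad m \<longleftrightarrow> (\<exists>A B. m = CApp A B \<and> W A \<and> W B)"

lemma W_shape: "W A \<Longrightarrow> A = comega \<or> (\<exists>a. A = CApp ci a) \<or> (\<exists>a b. A = CApp (CApp CK a) b)"
  by (induction rule: W.induct) auto

lemma Bad_step: "Bad m \<Longrightarrow> cl_step m m' \<Longrightarrow> Bad m'"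
proof -
  assume "Bad m" "cl_step m m'"
  then obtain A B where m: "m = CApp A B" "W A" "W B" unfolding Bad_def by blast
  from \<open>cl_step m m'\<close>[unfolded m(1)] show "Bad m'"
  proof (cases rule: cl_step.cases)
    case s_rule
    then have "A = comega" using W_shape[OF m(2)] by (auto simp: ci_def)
    then show ?thesis using s_rule m by (auto simp: Bad_def comega_def intro: W.intros)
  next
    case k_rule
    then show ?thesis using W_shape[OF m(2)] by (auto simp: ci_def comega_def)
  next
    case app_left
    then show ?thesis using m W_step unfolding Bad_def by blast
  next
    case app_right
    then show ?thesis using m W_step unfolding Bad_def by blast
  qed
qed

lemma Bad_not_normal: "Bad m \<Longrightarrow> \<not> cl_normal m"
proof -
  assume "Bad m"
  then obtain A B where m: "m = CApp A B" "W A" "W B" unfolding Bad_def by blast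
  then show ?thesis using W_shape[OF m(2)] by (auto simp: ci_def comega_def)
qed

lemma omom_no_nf: "cl_step\<^sup>*\<^sup>* (CApp comega comega) n \<Longrightarrow> \<not> cl_normal n"
proof -
  assume "cl_step\<^sup>*\<^sup>* (CApp comega comega) n"
  then have "Bad n"
  proof (induction rule: rtranclp_induct)
    case base
    then show ?case by (auto simp: Bad_def intro: W.intros)
  next
    case (step y z)
    then show ?case using Bad_step by blast
  qed
  then show ?thesis by (rule Bad_not_normal)
qed


fun subst :: "('v \<Rightarrow> 'v cterm) \<Rightarrow> 'v cterm \<Rightarrow> 'v cterm" where
  "subst \<sigma> (CVar x) = \<sigma> x"
| "subst \<sigma> CS = CS"
| "subst \<sigma> CK = CK"
| "subst \<sigma> (CApp m n) = CApp (subst \<sigma> m) (subst \<sigma> n)"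

lemma step_subst: "cl_step m n \<Longrightarrow> cl_step (subst \<sigma> m) (subst \<sigma> n)"
  by (induction rule: cl_step.induct) (auto intro: cl_step.intros)

lemma rt_subst: "cl_step\<^sup>*\<^sup>* m n \<Longrightarrow> cl_step\<^sup>*\<^sup>* (subst \<sigma> m) (subst \<sigma> n)"
  by (induction rule: rtranclp_induct) (auto intro: rtranclp.rtrancl_into_rtrancl step_subst)

lemma subst_id: "(\<forall>v\<in>cvars m. \<sigma> v = CVar v) \<Longrightarrow> subst \<sigma> m = m"
  by (induction m) auto

lemma finite_cvars: "finite (cvars m)"
  by (induction m) auto

lemma in_Nprime: "cl_normal m \<Longrightarrow> (\<And>x. cl_normal (CApp m (CVar x))) \<Longrightarrow> m \<in> Nprime"
proof -
  assume a: "cl_normal m" "\<And>x. cl_normal (CApp m (CVar x))"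
  have "nf_app m (CVar x) \<noteq> None" for x
    using nf_app_intro[of m "CVar x" "CApp m (CVar x)"] a(2)[of x] by (simp add: is_nf_of_def)
  then show ?thesis using a(1) unfolding Nprime_def Lset_def NF_def by blast
qed

lemma var_in: "CVar v \<in> Nprime"
  by (rule in_Nprime) auto

lemma pcaS: "is_pca A f S K \<Longrightarrow> x \<in> A \<Longrightarrow> y \<in> A \<Longrightarrow> z \<in> A \<Longrightarrow>
  papp f (papp f (papp f (Some S) (Some x)) (Some y)) (Some z)
          = papp f (papp f (Some x) (Some z)) (papp f (Some y) (Some z))"
  unfolding is_pca_def by blast

lemma pcaS2: "is_pca A f S K \<Longrightarrow> x \<in> A \<Longrightarrow> y \<in> A \<Longrightarrow>
  papp f (papp f (Some S) (Some x)) (Some y) \<noteq> None"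
  unfolding is_pca_def by blast

lemma papp_SomeE: "papp g X Y = Some r \<Longrightarrow> \<exists>a b. X = Some a \<and> Y = Some b \<and> g a b = Some r"
  by (cases X; cases Y) auto

lemma f_red: "nf_app' a b = Some r \<Longrightarrow> cl_step\<^sup>*\<^sup>* (CApp a b) r"
  using nf_app'_Some is_nf_of_def by blast

lemma papp3: "papp nf_app' (papp nf_app' (papp nf_app' (Some a) (Some b)) (Some c)) (Some e) = Some r
   \<Longrightarrow> cl_step\<^sup>*\<^sup>* (CApp (CApp (CApp a b) c) e) r"
proof -
  assume h: "papp nf_app' (papp nf_app' (papp nf_app' (Some a) (Some b)) (Some c)) (Some e) = Some r"
  obtain p2 where p2: "papp nf_app' (papp nf_app' (Some a) (Some b)) (Some c) = Some p2"
    "nf_app' p2 e = Some r" using papp_SomeE[OF h] by auto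
  obtain p1 where p1: "nf_app' a b = Some p1" "nf_app' p1 c = Some p2"
    using papp_SomeE[OF p2(1)] by auto
  have "cl_step\<^sup>*\<^sup>* (CApp (CApp (CApp a b) c) e) (CApp (CApp p1 c) e)"
    using f_red[OF p1(1)] by (intro rt_left)
  also have "cl_step\<^sup>*\<^sup>* \<dots> (CApp p2 e)" using f_red[OF p1(2)] by (intro rt_left)
  also have "cl_step\<^sup>*\<^sup>* \<dots> r" using f_red[OF p2(2)] .
  finally show ?thesis .
qed

lemma papp2: "papp nf_app' (papp nf_app' (Some a) (Some b)) (Some c) = Some r
   \<Longrightarrow> cl_step\<^sup>*\<^sup>* (CApp (CApp a b) c) r \<and> r \<in> Nprime"
proof -
  assume h: "papp nf_app' (papp nf_app' (Some a) (Some b)) (Some c) = Some r"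
  obtain p1 where p1: "nf_app' a b = Some p1" "nf_app' p1 c = Some r"
    using papp_SomeE[OF h] by auto
  have "cl_step\<^sup>*\<^sup>* (CApp (CApp a b) c) (CApp p1 c)"
    using f_red[OF p1(1)] by (intro rt_left)
  also have "cl_step\<^sup>*\<^sup>* \<dots> r" using f_red[OF p1(2)] .
  finally show ?thesis using nf_app'_Some[OF p1(2)] by blast
qed

lemma ci_red: "cl_step\<^sup>*\<^sup>* (CApp ci a) a"
proof -
  have "cl_step (CApp ci a) (CApp (CApp CK a) (CApp CK a))"
    unfolding ci_def by (rule cl_step.s_rule)
  also have "cl_step\<^sup>*\<^sup>* (CApp (CApp CK a) (CApp CK a)) a" by (rule r_into_rtranclp, rule cl_step.k_rule)
  finally show ?thesis .
qed

lemma cd_red: "cl_step\<^sup>*\<^sup>* (CApp cd a) (CApp comega comega)"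
proof -
  have "cl_step (CApp cd a) (CApp (CApp (CApp CK comega) a) (CApp (CApp CK comega) a))"
    unfolding cd_def by (rule cl_step.s_rule)
  also have "cl_step\<^sup>*\<^sup>* \<dots> (CApp comega comega)"
    by (intro rt_app) (auto intro: cl_step.k_rule)
  finally show ?thesis .
qed

lemma ci_in: "(ci :: 'v cterm) \<in> Nprime"
proof -
  have "nf_app (ci :: 'v cterm) (CVar x) = Some (CVar x)" for x
    by (rule nf_app_intro) (simp add: is_nf_of_def ci_red)
  then show ?thesis by (auto simp: Nprime_def Lset_def NF_def)
qed

lemma cd_in: "cd \<in> Nprime" by (simp add: Nprime_def)

lemma var_app_rt: "cl_step\<^sup>*\<^sup>* (CApp (CVar z) m) n \<Longrightarrow> \<exists>m'. n = CApp (CVar z) m' \<and> cl_step\<^sup>*\<^sup>* m m'"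
proof (induction rule: rtranclp_induct)
  case (step y w)
  then obtain m' where m': "y = CApp (CVar z) m'" "cl_step\<^sup>*\<^sup>* m m'" by blast
  from step(2)[unfolded m'(1)] show ?case
  proof (cases rule: cl_step.cases)
    case app_left
    then show ?thesis using normal_var cl_normal_def by metis
  next
    case app_right
    then show ?thesis using m' by (auto intro: rtranclp.rtrancl_into_rtrancl)
  qed
qed auto

theorem proposition5p3:
  assumes "infinite (UNIV :: 'v set)"
  shows "\<not> (\<exists>t u :: 'v cterm. t \<in> Nprime \<and> u \<in> Nprime \<and> is_pca Nprime nf_app' t u)"
proof
  assume "\<exists>t u :: 'v cterm. t \<in> Nprime \<and> u \<in> Nprime \<and> is_pca Nprime nf_app' t u"
  then obtain t u :: "'v cterm" where pca: "is_pca Nprime nf_app' t u" by blast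
  have fin: "finite (cvars t)" by (rule finite_cvars)
  obtain x0 where x0: "x0 \<notin> cvars t" using ex_new_if_finite[OF assms fin] by blast
  have fin2: "finite (cvars t \<union> {x0})" using fin by simp
  obtain y0 where y0: "y0 \<notin> cvars t \<union> {x0}" using ex_new_if_finite[OF assms fin2] by blast
  have fin3: "finite (cvars t \<union> {x0, y0})" using fin by simp
  obtain z0 where z0: "z0 \<notin> cvars t \<union> {x0, y0}" using ex_new_if_finite[OF assms fin3] by blast
  define X where "X = (CVar x0 :: 'v cterm)"
  define Y where "Y = (CVar y0 :: 'v cterm)"
  define Z where "Z = (CVar z0 :: 'v cterm)"
  have XZ: "nf_app' X Z = Some (CApp X Z)"
  proof (rule nf_app'_intro)
    show "is_nf_of (CApp X Z) (CApp X Z)" by (simp add: is_nf_of_def X_def Z_def)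
    show "CApp X Z \<in> Nprime" by (rule in_Nprime) (simp_all add: X_def Z_def)
  qed
  have YZ: "nf_app' Y Z = Some (CApp Y Z)"
  proof (rule nf_app'_intro)
    show "is_nf_of (CApp Y Z) (CApp Y Z)" by (simp add: is_nf_of_def Y_def Z_def)
    show "CApp Y Z \<in> Nprime" by (rule in_Nprime) (simp_all add: Y_def Z_def)
  qed
  have XZYZ: "nf_app' (CApp X Z) (CApp Y Z) = Some (CApp (CApp X Z) (CApp Y Z))"
  proof (rule nf_app'_intro)
    show "is_nf_of (CApp (CApp X Z) (CApp Y Z)) (CApp (CApp X Z) (CApp Y Z))"
      by (simp add: is_nf_of_def X_def Y_def Z_def)
    show "CApp (CApp X Z) (CApp Y Z) \<in> Nprime" by (rule in_Nprime) (simp_all add: X_def Y_def Z_def)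
  qed
  have Slaw: "papp nf_app' (papp nf_app' (papp nf_app' (Some t) (Some X)) (Some Y)) (Some Z)
      = papp nf_app' (papp nf_app' (Some X) (Some Z)) (papp nf_app' (Some Y) (Some Z))"
    unfolding X_def Y_def Z_def by (rule pcaS[OF pca var_in var_in var_in])
  then have "cl_step\<^sup>*\<^sup>* (CApp (CApp (CApp t X) Y) Z) (CApp (CApp X Z) (CApp Y Z))"
    using XZ YZ XZYZ by (intro papp3) simp
  then have gen: "cl_step\<^sup>*\<^sup>* (CApp (CApp (CApp t ci) cd) a) (CApp a (CApp comega comega))" for a
  proof -
    assume r: "cl_step\<^sup>*\<^sup>* (CApp (CApp (CApp t X) Y) Z) (CApp (CApp X Z) (CApp Y Z))"
    define \<sigma> where "\<sigma> = (\<lambda>v. if v = x0 then ci else if v = y0 then cd else if v = z0 then a else CVar v)"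
    have st: "subst \<sigma> t = t" using x0 y0 z0 by (intro subst_id) (auto simp: \<sigma>_def)
    have "cl_step\<^sup>*\<^sup>* (CApp (CApp (CApp t ci) cd) a) (CApp (CApp ci a) (CApp cd a))"
      using rt_subst[OF r, of \<sigma>] st y0 z0 by (auto simp: \<sigma>_def X_def Y_def Z_def)
    also have "cl_step\<^sup>*\<^sup>* \<dots> (CApp a (CApp comega comega))"
      by (rule rt_app[OF ci_red cd_red])
    finally show ?thesis .
  qed
  have "papp nf_app' (papp nf_app' (Some t) (Some ci)) (Some cd) \<noteq> None"
    by (rule pcaS2[OF pca ci_in cd_in])
  then obtain e where "papp nf_app' (papp nf_app' (Some t) (Some ci)) (Some cd) = Some e" by blast
  from papp2[OF this] have e: "cl_step\<^sup>*\<^sup>* (CApp (CApp t ci) cd) e" "e \<in> Nprime" by auto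
  show False
  proof (cases "e = cd")
    case True
    have A: "cl_step\<^sup>*\<^sup>* (CApp (CApp (CApp t ci) cd) (CApp CK ci)) ci"
    proof -
      have "cl_step\<^sup>*\<^sup>* (CApp (CApp (CApp t ci) cd) (CApp CK ci)) (CApp (CApp CK ci) (CApp comega comega))"
        by (rule gen)
      also have "cl_step \<dots> ci" by (rule cl_step.k_rule)
      finally show ?thesis by simp
    qed
    have B: "cl_step\<^sup>*\<^sup>* (CApp (CApp (CApp t ci) cd) (CApp CK ci)) (CApp comega comega)"
      using rtranclp_trans[OF rt_left[OF e(1)[unfolded True]] cd_red[of "CApp CK ci"]] .
    have "cl_step\<^sup>*\<^sup>* (CApp comega comega) (ci :: 'v cterm)"
      by (rule join_normal[OF B A normal_ci])
    then have "\<not> cl_normal (ci :: 'v cterm)" by (rule omom_no_nf)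
    then show False using normal_ci by simp
  next
    case False
    then have eL: "e \<in> Lset" using e(2) by (simp add: Nprime_def)
    obtain z where z: "z \<notin> cvars e" using ex_new_if_finite[OF assms finite_cvars] by blast
    have "\<forall>x. x \<notin> cvars e \<longrightarrow> nf_app e (CVar x) \<noteq> None"
      using eL unfolding Lset_def by blast
    then have "nf_app e (CVar z) \<noteq> None" using z by blast
    then obtain n where "nf_app e (CVar z) = Some n" by blast
    then have n: "is_nf_of (CApp e (CVar z)) n" by (rule nf_app_Some)
    have nr: "cl_step\<^sup>*\<^sup>* (CApp e (CVar z)) n" and nn: "cl_normal n"
      using n unfolding is_nf_of_def by auto
    have C: "cl_step\<^sup>*\<^sup>* (CApp (CApp (CApp t ci) cd) (CVar z)) n"
      by (rule rtranclp_trans[OF rt_left[OF e(1)] nr])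
    have D: "cl_step\<^sup>*\<^sup>* (CApp (CApp (CApp t ci) cd) (CVar z)) (CApp (CVar z) (CApp comega comega))"
      by (rule gen)
    have "cl_step\<^sup>*\<^sup>* (CApp (CVar z) (CApp comega comega)) n"
      by (rule join_normal[OF D C nn])
    from var_app_rt[OF this] obtain m' where m': "n = CApp (CVar z) m'" "cl_step\<^sup>*\<^sup>* (CApp comega comega) m'"
      by (elim exE conjE)
    have "\<not> cl_normal m'" by (rule omom_no_nf[OF m'(2)])
    moreover have "cl_normal m'" using nn unfolding m'(1) normal_app by blast
    ultimately show False by blast
  qed
qed

end
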